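(* Let $(X,d)$ be a metric space and let $\mathcal{B}$ be a bornology on $X$ with a closed base $\mathcal{B}_0$. Let $\tau_F$ and $\tau_F^s$ be the finest locally convex topologies of the extended locally convex spaces $(C(X),\tau_{\mathcal{B}})$ and $(C(X),\tau_{\mathcal{B}}^s)$, respectively. Then the following are equivalent: (i) $\tau_F=\tau_F^s$; (ii) $\tau_{\mathcal{B}}=\tau_{\mathcal{B}}^s$; (iii) $\mathcal{B}$ is shielded from closed sets.
   Context: $C(X)$ is the vector space of continuous real-valued functions on $(X,d)$. A bornology on $X$ is a family of nonempty subsets of $X$ covering $X$, closed under finite unions and under taking nonempty subsets; a base $\mathcal{B}_0$ is a subfamily cofinal under inclusion, and it is a closed base if its members are closed. $\tau_{\mathcal{B}}$ (uniform convergence on $\mathcal{B}$) is the topology on $C(X)$ induced by the extended seminorms $\rho_B(f)=\sup_{x\in B}|f(x)|$, $B\in\mathcal{B}_0$; $\tau_{\mathcal{B}}^s$ (strong uniform convergence on $\mathcal{B}$) is induced by the extended seminorms $\rho^s_B(f)=\inf_{\delta>0}\sup_{x\in B^\delta}|f(x)|$, $B\in\mathcal{B}_0$, where $B^\delta=\{x\in X: d(x,B)<\delta\}$. (A topology induced by a family $\{\rho_i\}$ of extended seminorms $\rho:V\to[0,\infty]$, i.e. absolutely homogeneous and subadditive maps, has as neighborhood base at $v_0$ the sets $\{v:\max_{i\in J}\rho_i(v-v_0)<\varepsilon\}$, $J$ finite; such a space is an extended locally convex space.) The finest locally convex topology of an extended locally convex space $(V,\tau)$ is the locally convex topology $\tau_F\subseteq\tau$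 (induced by finite-valued seminorms) such that every locally convex topology $\sigma\subseteq\tau$ on $V$ satisfies $\sigma\subseteq\tau_F$. For nonempty $A\subseteq X$, a superset $A_1\supseteq A$ is a shield for $A$ if for every closed $C\subseteq X$ with $C\cap A_1=\emptyset$ there is $\delta>0$ with $C\cap A^\delta=\emptyset$. $\mathcal{B}$ is shielded from closed sets if each $B\in\mathcal{B}$ has a shield belonging to $\mathcal{B}$. *)

theory Defs
  imports "HOL-Analysis.Analysis"
begin

text \<open>The metric space (X,d) is the whole of a type of class metric_space;
 C(X) is the set of continuous real-valued functions on it.\<close>

definition CX :: "('a::metric_space \<Rightarrow> real) set" where
  "CX = {f. continuous_on UNIV f}"

definition bornology :: "'a set set \<Rightarrow> bool" where
  "bornology \<B> \<longleftrightarrow> (\<forall>B\<in>\<B>. B \<noteq> {}) \<and> \<Union>\<B> = UNIV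
     \<and> (\<forall>A\<in>\<B>. \<forall>B\<in>\<B>. A \<union> B \<in> \<B>)
     \<and> (\<forall>B\<in>\<B>. \<forall>A. A \<subseteq> B \<and> A \<noteq> {} \<longrightarrow> A \<in> \<B>)"

definition bornology_base :: "'a set set \<Rightarrow> 'a set set \<Rightarrow> bool" where
  "bornology_base \<B> \<B>0 \<longleftrightarrow> \<B>0 \<subseteq> \<B> \<and> (\<forall>B\<in>\<B>. \<exists>B0\<in>\<B>0. B \<subseteq> B0)"

definition closed_bornology_base :: "'a::topological_space set set \<Rightarrow> 'a set set \<Rightarrow> bool" where
  "closed_bornology_base \<B> \<B>0 \<longleftrightarrow> bornology_base \<B> \<B>0 \<and> (\<forall>B\<in>\<B>0. closed B)"

definition enlarge :: "'a::metric_space set \<Rightarrow> real \<Rightarrow> 'a set" where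
  "enlarge B \<delta> = {x. infdist x B < \<delta>}"

definition seminorm_topology ::
  "('a \<Rightarrow> real) set \<Rightarrow> ('i \<Rightarrow> ('a \<Rightarrow> real) \<Rightarrow> ereal) \<Rightarrow> 'i set \<Rightarrow> ('a \<Rightarrow> real) topology" where
  "seminorm_topology V \<rho> I = topology (\<lambda>U. U \<subseteq> V \<and>
     (\<forall>v0\<in>U. \<exists>J \<epsilon>. finite J \<and> J \<subseteq> I \<and> \<epsilon> > 0 \<and>
        {v\<in>V. \<forall>i\<in>J. \<rho> i (\<lambda>x. v x - v0 x) < ereal \<epsilon>} \<subseteq> U))"

definition rho_B :: "'a set \<Rightarrow> ('a \<Rightarrow> real) \<Rightarrow> ereal" where
  "rho_B B f = (SUP x\<in>B. ereal \<bar>f x\<bar>)"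

definition rho_sB :: "'a::metric_space set \<Rightarrow> ('a \<Rightarrow> real) \<Rightarrow> ereal" where
  "rho_sB B f = (INF \<delta>\<in>{0<..}. SUP x\<in>enlarge B \<delta>. ereal \<bar>f x\<bar>)"

definition tau_B :: "'a::metric_space set set \<Rightarrow> ('a \<Rightarrow> real) topology" where
  "tau_B \<B>0 = seminorm_topology CX rho_B \<B>0"

definition tau_sB :: "'a::metric_space set set \<Rightarrow> ('a \<Rightarrow> real) topology" where
  "tau_sB \<B>0 = seminorm_topology CX rho_sB \<B>0"

definition seminorm_on :: "('a \<Rightarrow> real) set \<Rightarrow> (('a \<Rightarrow> real) \<Rightarrow> real) \<Rightarrow> bool" where
  "seminorm_on V p \<longleftrightarrow> (\<forall>v\<in>V. p v \<ge> 0)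
     \<and> (\<forall>v\<in>V. \<forall>c::real. p (\<lambda>x. c * v x) = \<bar>c\<bar> * p v)
     \<and> (\<forall>u\<in>V. \<forall>v\<in>V. p (\<lambda>x. u x + v x) \<le> p u + p v)"

definition locally_convex_topology :: "('a \<Rightarrow> real) set \<Rightarrow> ('a \<Rightarrow> real) topology \<Rightarrow> bool" where
  "locally_convex_topology V \<sigma> \<longleftrightarrow>
     (\<exists>P. (\<forall>p\<in>P. seminorm_on V p) \<and> \<sigma> = seminorm_topology V (\<lambda>p v. ereal (p v)) P)"

definition coarser :: "'b topology \<Rightarrow> 'b topology \<Rightarrow> bool" where
  "coarser \<sigma> \<tau> \<longleftrightarrow> (\<forall>U. openin \<sigma> U \<longrightarrow> openin \<tau> U)"

definition finest_lc_topology ::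
  "('a \<Rightarrow> real) set \<Rightarrow> ('a \<Rightarrow> real) topology \<Rightarrow> ('a \<Rightarrow> real) topology \<Rightarrow> bool" where
  "finest_lc_topology V \<tau> T \<longleftrightarrow> locally_convex_topology V T \<and> coarser T \<tau>
     \<and> (\<forall>\<sigma>. locally_convex_topology V \<sigma> \<and> coarser \<sigma> \<tau> \<longrightarrow> coarser \<sigma> T)"

definition shield :: "'a::metric_space set \<Rightarrow> 'a set \<Rightarrow> bool" where
  "shield A A1 \<longleftrightarrow> A \<subseteq> A1 \<and>
     (\<forall>C. closed C \<and> C \<inter> A1 = {} \<longrightarrow> (\<exists>\<delta>>0. C \<inter> enlarge A \<delta> = {}))"

definition shielded_from_closed_sets :: "'a::metric_space set set \<Rightarrow> bool" where
  "shielded_from_closed_sets \<B> \<longleftrightarrow> (\<forall>B\<in>\<B>. \<exists>A1\<in>\<B>. shield B A1)"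

end

theory Submission
  imports Defs "HOL-Library.Function_Algebras"
begin

lemma openin_snt:
  "openin (seminorm_topology V \<rho> I) U \<longleftrightarrow> U \<subseteq> V \<and>
     (\<forall>v0\<in>U. \<exists>J \<epsilon>. finite J \<and> J \<subseteq> I \<and> \<epsilon> > 0 \<and>
        {v\<in>V. \<forall>i\<in>J. \<rho> i (\<lambda>x. v x - v0 x) < ereal \<epsilon>} \<subseteq> U)"
proof -
  let ?P = "\<lambda>U. U \<subseteq> V \<and>
     (\<forall>v0\<in>U. \<exists>J \<epsilon>. finite J \<and> J \<subseteq> I \<and> \<epsilon> > 0 \<and>
        {v\<in>V. \<forall>i\<in>J. \<rho> i (\<lambda>x. v x - v0 x) < ereal \<epsilon>} \<subseteq> U)"
  have i1: "?P (S \<inter> T)" if S: "?P S" and T: "?P T" for S T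
  proof -
    have sub: "S \<inter> T \<subseteq> V" using S by auto
    have "\<forall>v0\<in>S \<inter> T. \<exists>J \<epsilon>. finite J \<and> J \<subseteq> I \<and> \<epsilon> > 0 \<and>
        {v\<in>V. \<forall>i\<in>J. \<rho> i (\<lambda>x. v x - v0 x) < ereal \<epsilon>} \<subseteq> S \<inter> T"
    proof
      fix v0 assume "v0 \<in> S \<inter> T"
      then have "v0 \<in> S" "v0 \<in> T" by auto
      obtain J1 e1 where 1: "finite J1" "J1 \<subseteq> I" "e1 > 0"
          "{v\<in>V. \<forall>i\<in>J1. \<rho> i (\<lambda>x. v x - v0 x) < ereal e1} \<subseteq> S"
        using S \<open>v0 \<in> S\<close> by blast
      obtain J2 e2 where 2: "finite J2" "J2 \<subseteq> I" "e2 > 0"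
          "{v\<in>V. \<forall>i\<in>J2. \<rho> i (\<lambda>x. v x - v0 x) < ereal e2} \<subseteq> T"
        using T \<open>v0 \<in> T\<close> by blast
      have inc: "{v\<in>V. \<forall>i\<in>J1 \<union> J2. \<rho> i (\<lambda>x. v x - v0 x) < ereal (min e1 e2)} \<subseteq> S \<inter> T"
      proof
        fix v assume v: "v \<in> {v\<in>V. \<forall>i\<in>J1 \<union> J2. \<rho> i (\<lambda>x. v x - v0 x) < ereal (min e1 e2)}"
        have "ereal (min e1 e2) \<le> ereal e1" "ereal (min e1 e2) \<le> ereal e2" by auto
        then have "v \<in> {v\<in>V. \<forall>i\<in>J1. \<rho> i (\<lambda>x. v x - v0 x) < ereal e1}"
             "v \<in> {v\<in>V. \<forall>i\<in>J2. \<rho> i (\<lambda>x. v x - v0 x) < ereal e2}"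
          using v by (auto intro: less_le_trans)
        then show "v \<in> S \<inter> T" using 1 2 by blast
      qed
      show "\<exists>J \<epsilon>. finite J \<and> J \<subseteq> I \<and> \<epsilon> > 0 \<and>
        {v\<in>V. \<forall>i\<in>J. \<rho> i (\<lambda>x. v x - v0 x) < ereal \<epsilon>} \<subseteq> S \<inter> T"
        using 1 2 inc by (intro exI[of _ "J1 \<union> J2"] exI[of _ "min e1 e2"]) auto
    qed
    then show "?P (S \<inter> T)" using sub by blast
  qed
  have i2: "?P (\<Union>K)" if K: "\<forall>S\<in>K. ?P S" for K

    proof (intro conjI ballI)
      show "\<Union>K \<subseteq> V" using K by auto
      fix v0 assume "v0 \<in> \<Union>K"
      then obtain S where "S \<in> K" "v0 \<in> S" by auto
      then obtain J e where "finite J" "J \<subseteq> I" "e > 0"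
          "{v\<in>V. \<forall>i\<in>J. \<rho> i (\<lambda>x. v x - v0 x) < ereal e} \<subseteq> S"
        using K by meson
      then show "\<exists>J \<epsilon>. finite J \<and> J \<subseteq> I \<and> \<epsilon> > 0 \<and>
        {v\<in>V. \<forall>i\<in>J. \<rho> i (\<lambda>x. v x - v0 x) < ereal \<epsilon>} \<subseteq> \<Union>K"
        using \<open>S \<in> K\<close> by blast
    qed
  have "istopology ?P" unfolding istopology_def using i1 i2 by blast
  then show ?thesis unfolding seminorm_topology_def by simp
qed

lemma sup_less_iff:
  "(SUP x\<in>A. ereal \<bar>g x\<bar>) < ereal \<epsilon> \<longleftrightarrow> (\<exists>t<\<epsilon>. \<forall>x\<in>A. \<bar>g x\<bar> \<le> t)"
proof
  assume "(SUP x\<in>A. ereal \<bar>g x\<bar>) < ereal \<epsilon>"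
  then obtain z where z: "(SUP x\<in>A. ereal \<bar>g x\<bar>) < ereal z" "ereal z < ereal \<epsilon>"
    using ereal_dense2 by blast
  have "\<forall>x\<in>A. \<bar>g x\<bar> \<le> z"
  proof
    fix x assume "x \<in> A"
    then have "ereal \<bar>g x\<bar> \<le> (SUP x\<in>A. ereal \<bar>g x\<bar>)" by (rule SUP_upper)
    then have "ereal \<bar>g x\<bar> < ereal z" using z(1) by (rule le_less_trans)
    then show "\<bar>g x\<bar> \<le> z" by simp
  qed
  then show "\<exists>t<\<epsilon>. \<forall>x\<in>A. \<bar>g x\<bar> \<le> t" using z(2) by auto
next
  assume "\<exists>t<\<epsilon>. \<forall>x\<in>A. \<bar>g x\<bar> \<le> t"
  then obtain t where t: "t < \<epsilon>" "\<forall>x\<in>A. \<bar>g x\<bar> \<le> t" by auto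
  have "(SUP x\<in>A. ereal \<bar>g x\<bar>) \<le> ereal t" using t(2) by (auto intro!: SUP_least)
  also have "\<dots> < ereal \<epsilon>" using t(1) by simp
  finally show "(SUP x\<in>A. ereal \<bar>g x\<bar>) < ereal \<epsilon>" .
qed

lemma rho_B_less: "rho_B B g < ereal \<epsilon> \<longleftrightarrow> (\<exists>t<\<epsilon>. \<forall>x\<in>B. \<bar>g x\<bar> \<le> t)"
  unfolding rho_B_def by (rule sup_less_iff)

lemma rho_sB_less: "rho_sB B g < ereal \<epsilon> \<longleftrightarrow> (\<exists>\<delta>>0. \<exists>t<\<epsilon>. \<forall>x\<in>enlarge B \<delta>. \<bar>g x\<bar> \<le> t)"
  unfolding rho_sB_def INF_less_iff sup_less_iff by auto

lemma subset_enlarge: "\<delta> > 0 \<Longrightarrow> B \<subseteq> enlarge B \<delta>"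
  unfolding enlarge_def by auto

lemma enlarge_mono: "\<delta> \<le> \<delta>' \<Longrightarrow> enlarge B \<delta> \<subseteq> enlarge B \<delta>'"
  unfolding enlarge_def by auto

lemma enlarge_mono2: "B \<subseteq> B' \<Longrightarrow> B \<noteq> {} \<Longrightarrow> enlarge B \<delta> \<subseteq> enlarge B' \<delta>"
proof -
  assume a: "B \<subseteq> B'" "B \<noteq> {}"
  show ?thesis unfolding enlarge_def using infdist_mono[OF a] by (auto intro: le_less_trans)
qed

lemma CX_diff: "u \<in> CX \<Longrightarrow> v \<in> CX \<Longrightarrow> (\<lambda>x. u x - v x) \<in> CX"
  unfolding CX_def by (auto intro: continuous_on_diff)
lemma CX_add: "u \<in> CX \<Longrightarrow> v \<in> CX \<Longrightarrow> (\<lambda>x. u x + v x) \<in> CX"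
  unfolding CX_def by (auto intro: continuous_on_add)
lemma CX_scale: "v \<in> CX \<Longrightarrow> (\<lambda>x. c * v x) \<in> CX"
  unfolding CX_def by (auto intro: continuous_on_mult continuous_on_const)
lemma CX_0: "(\<lambda>x. 0) \<in> CX"
  unfolding CX_def by auto

lemma urysohn_fn:
  fixes A C :: "'a::metric_space set"
  assumes "closed A" "closed C" "A \<noteq> {}" "C \<noteq> {}" "A \<inter> C = {}"
  shows "\<exists>f\<in>CX. (\<forall>x\<in>A. f x = 0) \<and> (\<forall>x\<in>C. f x = 1) \<and> (\<forall>x. \<bar>f x\<bar> \<le> 1)"
proof -
  have pos: "infdist x A + infdist x C > 0" for x
  proof -
    have "infdist x A \<noteq> 0 \<or> infdist x C \<noteq> 0"
      using assms in_closed_iff_infdist_zero[of A x] in_closed_iff_infdist_zero[of C x] by auto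
    then show ?thesis using infdist_nonneg[of x A] infdist_nonneg[of x C] by linarith
  qed
  have nz: "infdist x A + infdist x C \<noteq> 0" for x using pos[of x] by linarith
  define f where "f x = infdist x A / (infdist x A + infdist x C)" for x
  have "continuous_on UNIV f"
    unfolding f_def using pos
    by (intro continuous_intros) (auto simp: nz)
  moreover have "\<forall>x\<in>A. f x = 0" unfolding f_def by simp
  moreover have "\<forall>x\<in>C. f x = 1"
  proof
    fix x assume "x \<in> C"
    then have "infdist x C = 0" by simp
    then show "f x = 1" using pos[of x] unfolding f_def by simp
  qed
  moreover have "\<bar>f x\<bar> \<le> 1" for x
    unfolding f_def using pos[of x] infdist_nonneg[of x A] infdist_nonneg[of x C]
    by (simp add: abs_le_iff divide_le_eq_1)
  ultimately show ?thesis unfolding CX_def by blast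
qed

definition sc :: "real \<Rightarrow> ('a \<Rightarrow> real) \<Rightarrow> ('a \<Rightarrow> real)" where "sc = (\<lambda>c f x. c * f x)"
lemma a1: "sc a (x + y) = sc a x + sc a y"
    by (simp add: sc_def plus_fun_def distrib_left)
lemma a2: "sc (a + b) x = sc a x + sc b x"
    by (simp add: sc_def plus_fun_def distrib_right)
lemma a3: "sc a (sc b x) = sc (a * b) x"
    by (simp add: sc_def mult.assoc)
lemma a4: "sc 1 x = x" 
    by (simp add: sc_def)
interpretation vs: vector_space sc
    by unfold_locales (rule a1, rule a2, rule a3, rule a4)
interpretation vp: vector_space_pair sc sc ..

lemma proj_exists:
  fixes V :: "('a \<Rightarrow> real) set"
  assumes V0: "(\<lambda>x. 0) \<in> V" and Vadd: "\<And>u v. u\<in>V \<Longrightarrow> v\<in>V \<Longrightarrow> (\<lambda>x. u x + v x) \<in> V"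
    and Vsc: "\<And>c v. v\<in>V \<Longrightarrow> (\<lambda>x. c * v x) \<in> V"
  shows "\<exists>\<pi>. (\<forall>u v. \<pi> (\<lambda>x. u x + v x) = (\<lambda>x. \<pi> u x + \<pi> v x))
     \<and> (\<forall>c u. \<pi> (\<lambda>x. c * u x) = (\<lambda>x. c * \<pi> u x)) \<and> (\<forall>v\<in>V. \<pi> v = v) \<and> (\<forall>v. \<pi> v \<in> V)"
proof -
  have subV: "vs.subspace V"
  proof (rule vs.subspaceI)
    show "0 \<in> V" using V0 by (simp add: zero_fun_def)
  next
    fix x y assume "x \<in> V" "y \<in> V" then show "x + y \<in> V" using Vadd by (simp add: plus_fun_def)
  next
    fix c x assume "x \<in> V" then show "sc c x \<in> V" using Vsc by (simp add: sc_def)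
  qed
  obtain b where b: "b \<subseteq> V" "vs.independent b" "V \<subseteq> vs.span b" "card b = vs.dim V"
    by (rule vs.basis_exists)
  have spanb: "vs.span b = V" using vs.span_subspace[OF b(1) b(3) subV] .
  define \<pi> where "\<pi> = vp.construct b (\<lambda>v. v)"
  have lin: "Vector_Spaces.linear sc sc \<pi>" unfolding \<pi>_def by (rule vp.linear_construct[OF b(2)])
  have linid: "Vector_Spaces.linear sc sc (\<lambda>v. v)"
    using vs.linear_id unfolding id_def .
  have idV: "\<pi> v = v" if vV: "v \<in> V" for v
  proof (rule vp.linear_eq_on[OF lin linid])
    show "v \<in> vs.span b" using vV spanb by simp
    fix c assume "c \<in> b" then show "\<pi> c = c" unfolding \<pi>_def by (rule vp.construct_basis[OF b(2)])
  qed
  have img: "\<pi> ` vs.extend_basis b \<subseteq> insert 0 b"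
  proof
    fix y assume "y \<in> \<pi> ` vs.extend_basis b"
    then obtain e where e: "e \<in> vs.extend_basis b" "y = \<pi> e" by auto
    show "y \<in> insert 0 b"
    proof (cases "e \<in> b")
      case True then show ?thesis using e unfolding \<pi>_def by (simp add: vp.construct_basis[OF b(2)])
    next
      case False
      then have "e \<in> vs.span (vs.extend_basis b - b)" using e(1) by (intro vs.span_base) simp
      then show ?thesis using e unfolding \<pi>_def by (simp add: vp.construct_outside[OF b(2)])
    qed
  qed
  have inV: "\<pi> v \<in> V" for v
  proof -
    have "\<pi> v \<in> \<pi> ` vs.span (vs.extend_basis b)" using vs.span_extend_basis[OF b(2)] by simp
    also have "\<dots> = vs.span (\<pi> ` vs.extend_basis b)"
      by (rule vp.linear_span_image[OF lin, symmetric])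
    also have "\<dots> \<subseteq> vs.span (insert 0 b)" by (rule vs.span_mono[OF img])
    also have "\<dots> = V" using spanb by simp
    finally show ?thesis .
  qed
  have add: "\<pi> (\<lambda>x. u x + v x) = (\<lambda>x. \<pi> u x + \<pi> v x)" for u v
    using vp.linear_add[OF lin, of u v] by (simp add: plus_fun_def)
  have scl: "\<pi> (\<lambda>x. c * u x) = (\<lambda>x. c * \<pi> u x)" for c u
    using vp.linear_scale[OF lin, of c u] by (simp add: sc_def)
  show ?thesis using add scl idV inV by blast
qed

lemma born_ne: "bornology \<B> \<Longrightarrow> B \<in> \<B> \<Longrightarrow> B \<noteq> {}"
proof -
  assume a: "bornology \<B>" "B \<in> \<B>"
  have "\<forall>B\<in>\<B>. B \<noteq> {}" using a(1) unfolding bornology_def by (rule conjunct1)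
  then show ?thesis using a(2) by (rule bspec)
qed

lemma born_un: "bornology \<B> \<Longrightarrow> A \<in> \<B> \<Longrightarrow> B \<in> \<B> \<Longrightarrow> A \<union> B \<in> \<B>"
proof -
  assume a: "bornology \<B>" "A \<in> \<B>" "B \<in> \<B>"
  have "\<forall>A\<in>\<B>. \<forall>B\<in>\<B>. A \<union> B \<in> \<B>" using a(1) unfolding bornology_def
    by (elim conjE)
  then show ?thesis using a(2,3) by blast
qed

lemma union_in_born:
  assumes born: "bornology \<B>" and fin: "finite J"
  shows "J \<subseteq> \<B> \<Longrightarrow> B0 \<in> \<B> \<Longrightarrow> B0 \<union> \<Union>J \<in> \<B>"
  using fin
proof (induction J rule: finite_induct)
  case empty then show ?case by simp
next
  case (insert j J)
  then have "j \<union> (B0 \<union> \<Union>J) \<in> \<B>" using born_un[OF born] by simp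
  moreover have "B0 \<union> \<Union>(insert j J) = j \<union> (B0 \<union> \<Union>J)" by auto
  ultimately show ?case by simp
qed

lemma bad_fn:
  assumes born: "bornology \<B>" and base: "closed_bornology_base \<B> \<B>0"
   and B: "B \<in> \<B>" "\<forall>A1\<in>\<B>. \<not> shield B A1" and B0: "B0 \<in> \<B>0" "B \<subseteq> B0"
   and J: "finite J" "J \<subseteq> \<B>0"
  shows "\<exists>f\<in>CX. (\<forall>i\<in>J. \<forall>x\<in>i. f x = 0) \<and> (\<forall>\<delta>>0. \<exists>x\<in>enlarge B0 \<delta>. f x = 1) \<and> (\<forall>x. \<bar>f x\<bar> \<le> 1)"
proof -
  have Bne: "B \<noteq> {}" using born_ne[OF born B(1)] .
  have sub: "\<B>0 \<subseteq> \<B>" using base unfolding closed_bornology_base_def bornology_base_def by auto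
  have clo: "\<forall>X\<in>\<B>0. closed X" using base unfolding closed_bornology_base_def by auto
  define A1 where "A1 = B0 \<union> \<Union>J"
  have JB: "J \<subseteq> \<B>" using J(2) sub by blast
  have B0B: "B0 \<in> \<B>" using B0(1) sub by blast
  have A1B: "A1 \<in> \<B>" unfolding A1_def by (rule union_in_born[OF born J(1) JB B0B])
  have cJ: "closed (\<Union>J)" using J(1) by (rule closed_Union) (use J(2) clo in blast)
  have cB0: "closed B0" using clo B0(1) by blast
  have A1c: "closed A1" unfolding A1_def using cB0 cJ by (rule closed_Un)
  have BA1: "B \<subseteq> A1" using B0(2) unfolding A1_def by blast
  have "\<not> shield B A1" using B(2) A1B by blast
  then have "\<not> (\<forall>C. closed C \<and> C \<inter> A1 = {} \<longrightarrow> (\<exists>\<delta>>0. C \<inter> enlarge B \<delta> = {}))"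
    using BA1 unfolding shield_def by blast
  then obtain C where C: "closed C" "C \<inter> A1 = {}" "\<forall>\<delta>>0. C \<inter> enlarge B \<delta> \<noteq> {}"
    by blast
  have "C \<inter> enlarge B 1 \<noteq> {}" using C(3) by simp
  then have Cne: "C \<noteq> {}" by blast
  have A1ne: "A1 \<noteq> {}" using BA1 Bne by blast
  obtain f where f: "f \<in> CX" "\<forall>x\<in>A1. f x = 0" "\<forall>x\<in>C. f x = 1" "\<forall>x. \<bar>f x\<bar> \<le> 1"
    using urysohn_fn[OF A1c C(1) A1ne Cne] C(2) by blast
  have "\<forall>\<delta>>0. \<exists>x\<in>enlarge B0 \<delta>. f x = 1"
  proof (intro allI impI)
    fix \<delta>::real assume "\<delta>>0"
    then obtain x where "x \<in> C" "x \<in> enlarge B \<delta>" using C(3) by blast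
    then show "\<exists>x\<in>enlarge B0 \<delta>. f x = 1" using enlarge_mono2[OF B0(2) Bne] f(3) by blast
  qed
  moreover have "\<forall>i\<in>J. \<forall>x\<in>i. f x = 0" using f(2) A1_def by auto
  ultimately show ?thesis using f by blast
qed

lemma not_shielded_lc:
  fixes \<B> \<B>0 :: "'a::metric_space set set"
  assumes born: "bornology \<B>" and base: "closed_bornology_base \<B> \<B>0"
   and B: "B \<in> \<B>" "\<forall>A1\<in>\<B>. \<not> shield B A1"
  shows "\<exists>\<sigma>. locally_convex_topology CX \<sigma> \<and> coarser \<sigma> (tau_sB \<B>0) \<and> \<not> coarser \<sigma> (tau_B \<B>0)"
proof -
  obtain B0 where B0: "B0 \<in> \<B>0" "B \<subseteq> B0"
    using base B(1) unfolding closed_bornology_base_def bornology_base_def by blast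
  have Bne: "B \<noteq> {}" using born_ne[OF born B(1)] .
  then obtain x0 where x0: "x0 \<in> B0" using B0 by blast
  define S where "S h = {t. \<exists>\<delta>>0. \<forall>x\<in>enlarge B0 \<delta>. \<bar>h x\<bar> \<le> t}" for h :: "'a \<Rightarrow> real"
  define V where "V = {h \<in> CX. S h \<noteq> {}}"
  define q where "q h = Inf (S h)" for h
  have S_ge0: "0 \<le> t" if tS: "t \<in> S h" for t h
  proof -
    obtain \<delta> where "\<delta> > 0" "\<forall>x\<in>enlarge B0 \<delta>. \<bar>h x\<bar> \<le> t" using tS S_def by auto
    then have "\<bar>h x0\<bar> \<le> t" using subset_enlarge[of \<delta> B0] x0 by blast
    then show ?thesis by linarith
  qed
  have bdd: "bdd_below (S h)" for h using S_ge0 by (intro bdd_belowI) auto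
  have q_le: "q h \<le> t" if "t \<in> S h" for t h unfolding q_def by (rule cInf_lower[OF that bdd])
  have q_ge0: "0 \<le> q h" if "h \<in> V" for h
    unfolding q_def using that V_def S_ge0 by (intro cInf_greatest) auto
  have q_less: "\<exists>t\<in>S h. t < e" if "h \<in> V" "q h < e" for h e
    using that cInf_less_iff[OF _ bdd] unfolding q_def V_def by auto
  have S0: "0 \<in> S (\<lambda>x. 0)" unfolding S_def by (auto intro: exI[of _ 1])
  have V0: "(\<lambda>x. 0) \<in> V" unfolding V_def using CX_0 S0 by auto
  have Sadd: "t1 + t2 \<in> S (\<lambda>x. u x + v x)" if tS: "t1 \<in> S u" "t2 \<in> S v" for t1 t2 u v
  proof -
    obtain d1 where d1: "d1 > 0" "\<forall>x\<in>enlarge B0 d1. \<bar>u x\<bar> \<le> t1" using tS S_def by auto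
    obtain d2 where d2: "d2 > 0" "\<forall>x\<in>enlarge B0 d2. \<bar>v x\<bar> \<le> t2" using tS S_def by auto
    have "\<forall>x\<in>enlarge B0 (min d1 d2). \<bar>u x + v x\<bar> \<le> t1 + t2"
    proof
      fix x assume "x \<in> enlarge B0 (min d1 d2)"
      then have "x \<in> enlarge B0 d1" "x \<in> enlarge B0 d2" using enlarge_mono[of "min d1 d2" d1 B0] enlarge_mono[of "min d1 d2" d2 B0] by auto
      then show "\<bar>u x + v x\<bar> \<le> t1 + t2" using d1 d2 abs_triangle_ineq[of "u x" "v x"] by fastforce
    qed
    then show ?thesis unfolding S_def using d1 d2 by (auto intro!: exI[of _ "min d1 d2"])
  qed
  have Sscale: "\<bar>c\<bar> * t \<in> S (\<lambda>x. c * h x)" if tS: "t \<in> S h" for t c h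
  proof -
    obtain d where d: "d > 0" "\<forall>x\<in>enlarge B0 d. \<bar>h x\<bar> \<le> t" using tS S_def by auto
    have "\<forall>x\<in>enlarge B0 d. \<bar>c * h x\<bar> \<le> \<bar>c\<bar> * t"
      using d by (auto simp: abs_mult intro: mult_left_mono)
    then show ?thesis unfolding S_def using d by auto
  qed
  have Vadd: "(\<lambda>x. u x + v x) \<in> V" if "u \<in> V" "v \<in> V" for u v
    using that Sadd CX_add unfolding V_def by blast
  have Vsc: "(\<lambda>x. c * v x) \<in> V" if "v \<in> V" for c v
    using that Sscale CX_scale unfolding V_def by blast
  obtain \<pi> where pi_add: "\<And>u v. \<pi> (\<lambda>x. u x + v x) = (\<lambda>x. \<pi> u x + \<pi> v x)"
    and pi_sc: "\<And>c u. \<pi> (\<lambda>x. c * u x) = (\<lambda>x. c * \<pi> u x)"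
    and pi_id: "\<And>v. v\<in>V \<Longrightarrow> \<pi> v = v" and pi_V: "\<And>v. \<pi> v \<in> V"
    using proj_exists[of V, OF V0 Vadd Vsc] by blast
  have q_sc_le: "q (\<lambda>x. c * h x) \<le> \<bar>c\<bar> * q h" if "h \<in> V" for c h
  proof (cases "c = 0")
    case True
    then have "0 \<in> S (\<lambda>x. c * h x)" using S0 by simp
    then show ?thesis using q_le True by auto
  next
    case False
    then have cpos: "\<bar>c\<bar> > 0" by simp
    have "q (\<lambda>x. c * h x) / \<bar>c\<bar> \<le> q h"
      unfolding q_def[of h]
    proof (rule cInf_greatest)
      show "S h \<noteq> {}" using that V_def by auto
      fix t assume "t \<in> S h"
      then have "q (\<lambda>x. c * h x) \<le> \<bar>c\<bar> * t" using Sscale q_le by blast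
      then show "q (\<lambda>x. c * h x) / \<bar>c\<bar> \<le> t" using cpos by (simp add: divide_le_eq mult.commute)
    qed
    then show ?thesis using cpos by (simp add: divide_le_eq mult.commute)
  qed
  have q_sc: "q (\<lambda>x. c * h x) = \<bar>c\<bar> * q h" if "h \<in> V" for c h
  proof (cases "c = 0")
    case True
    then show ?thesis using q_sc_le[OF that, of c] q_ge0[OF Vsc[OF that, of c]] by simp
  next
    case False
    have "q (\<lambda>x. (1/c) * (c * h x)) \<le> \<bar>1/c\<bar> * q (\<lambda>x. c * h x)"
      by (rule q_sc_le[OF Vsc[OF that]])
    then have "q h \<le> \<bar>1/c\<bar> * q (\<lambda>x. c * h x)" using False by simp
    then have "\<bar>c\<bar> * q h \<le> q (\<lambda>x. c * h x)" using False
      by (simp add: field_simps abs_divide)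
    then show ?thesis using q_sc_le[OF that, of c] by linarith
  qed
  have q_add: "q (\<lambda>x. u x + v x) \<le> q u + q v" if uv: "u \<in> V" "v \<in> V" for u v
  proof (rule field_le_epsilon)
    fix e :: real assume "e > 0"
    obtain t1 where t1: "t1 \<in> S u" "t1 < q u + e/2" using q_less[OF uv(1)] \<open>e > 0\<close> by force
    obtain t2 where t2: "t2 \<in> S v" "t2 < q v + e/2" using q_less[OF uv(2)] \<open>e > 0\<close> by force
    have "q (\<lambda>x. u x + v x) \<le> t1 + t2" using q_le Sadd t1 t2 by blast
    then show "q (\<lambda>x. u x + v x) \<le> q u + q v + e" using t1 t2 by linarith
  qed
  define p0 where "p0 v = q (\<pi> v)" for v
  have sn: "seminorm_on CX p0"
    unfolding seminorm_on_def
  proof (intro conjI ballI allI)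
    fix v show "0 \<le> p0 v" using q_ge0[OF pi_V] p0_def by simp
  next
    fix v c show "p0 (\<lambda>x. c * v x) = \<bar>c\<bar> * p0 v" unfolding p0_def pi_sc using q_sc[OF pi_V] by simp
  next
    fix u v show "p0 (\<lambda>x. u x + v x) \<le> p0 u + p0 v" unfolding p0_def pi_add using q_add[OF pi_V pi_V] by simp
  qed
  define \<sigma> where "\<sigma> = seminorm_topology CX (\<lambda>p v. ereal (p v)) {p0}"
  have lc: "locally_convex_topology CX \<sigma>"
    unfolding locally_convex_topology_def \<sigma>_def by (intro exI[of _ "{p0}"] conjI) (simp_all add: sn)
  have p0_less: "p0 h < e" if hh: "h \<in> CX" "rho_sB B0 h < ereal e" for h e
  proof -
    obtain \<delta> t where dt: "\<delta> > 0" "t < e" "\<forall>x\<in>enlarge B0 \<delta>. \<bar>h x\<bar> \<le> t"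
      using hh(2) rho_sB_less by blast
    then have "t \<in> S h" unfolding S_def by auto
    then have "h \<in> V" "q h \<le> t" using hh(1) q_le V_def by auto
    then show ?thesis using pi_id dt(2) p0_def by auto
  qed
  have c1: "coarser \<sigma> (tau_sB \<B>0)"
    unfolding coarser_def
  proof (intro allI impI)
    fix U assume "openin \<sigma> U"
    then have "openin (seminorm_topology CX (\<lambda>p v. ereal (p v)) {p0}) U" by (simp add: \<sigma>_def)
    then have U: "U \<subseteq> CX \<and> (\<forall>v0\<in>U. \<exists>J \<epsilon>. finite J \<and> J \<subseteq> {p0} \<and> \<epsilon> > 0 \<and>
        {v\<in>CX. \<forall>i\<in>J. ereal (i (\<lambda>x. v x - v0 x)) < ereal \<epsilon>} \<subseteq> U)"
      unfolding openin_snt .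
    show "openin (tau_sB \<B>0) U"
      unfolding tau_sB_def openin_snt
    proof (intro conjI ballI)
      show "U \<subseteq> CX" using U by blast
      fix v0 assume "v0 \<in> U"
      then obtain J \<epsilon> where Je: "finite J" "J \<subseteq> {p0}" "\<epsilon> > 0"
        "{v\<in>CX. \<forall>i\<in>J. ereal (i (\<lambda>x. v x - v0 x)) < ereal \<epsilon>} \<subseteq> U" using U by blast
      have v0C: "v0 \<in> CX" using \<open>v0 \<in> U\<close> U by auto
      have "{v\<in>CX. \<forall>i\<in>{B0}. rho_sB i (\<lambda>x. v x - v0 x) < ereal \<epsilon>} \<subseteq> U"
      proof
        fix v assume v: "v \<in> {v\<in>CX. \<forall>i\<in>{B0}. rho_sB i (\<lambda>x. v x - v0 x) < ereal \<epsilon>}"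
        then have "p0 (\<lambda>x. v x - v0 x) < \<epsilon>" using p0_less CX_diff v0C by auto
        then have "v \<in> {v\<in>CX. \<forall>i\<in>J. ereal (i (\<lambda>x. v x - v0 x)) < ereal \<epsilon>}"
          using v Je(2) by auto
        then show "v \<in> U" using Je(4) by blast
      qed
      then show "\<exists>J \<epsilon>. finite J \<and> J \<subseteq> \<B>0 \<and> \<epsilon> > 0 \<and>
        {v\<in>CX. \<forall>i\<in>J. rho_sB i (\<lambda>x. v x - v0 x) < ereal \<epsilon>} \<subseteq> U"
        using B0(1) Je(3) by (intro exI[of _ "{B0}"] exI[of _ \<epsilon>]) auto
    qed
  qed
  define Ball where "Ball = {v\<in>CX. p0 v < 1}"
  have oBall: "openin \<sigma> Ball"
    unfolding \<sigma>_def openin_snt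
  proof (intro conjI ballI)
    show "Ball \<subseteq> CX" unfolding Ball_def by auto
    fix v0 assume v0: "v0 \<in> Ball"
    have "{v\<in>CX. \<forall>i\<in>{p0}. ereal (i (\<lambda>x. v x - v0 x)) < ereal (1 - p0 v0)} \<subseteq> Ball"
    proof
      fix v assume v: "v \<in> {v\<in>CX. \<forall>i\<in>{p0}. ereal (i (\<lambda>x. v x - v0 x)) < ereal (1 - p0 v0)}"
      have vC: "v \<in> CX" "v0 \<in> CX" using v v0 unfolding Ball_def by auto
      have tri: "\<forall>u\<in>CX. \<forall>w\<in>CX. p0 (\<lambda>x. u x + w x) \<le> p0 u + p0 w"
        using sn unfolding seminorm_on_def by blast
      have "p0 (\<lambda>x. (v x - v0 x) + v0 x) \<le> p0 (\<lambda>x. v x - v0 x) + p0 v0"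
        by (rule tri[rule_format, OF CX_diff[OF vC] vC(2)])
      then have "p0 v \<le> p0 (\<lambda>x. v x - v0 x) + p0 v0" by simp
      then show "v \<in> Ball" using v unfolding Ball_def by auto
    qed
    then show "\<exists>J \<epsilon>. finite J \<and> J \<subseteq> {p0} \<and> \<epsilon> > 0 \<and>
        {v\<in>CX. \<forall>i\<in>J. ereal (i (\<lambda>x. v x - v0 x)) < ereal \<epsilon>} \<subseteq> Ball"
      using v0 unfolding Ball_def by (intro exI[of _ "{p0}"] exI[of _ "1 - p0 v0"]) auto
  qed
  have "\<not> openin (tau_B \<B>0) Ball"
  proof
    assume "openin (tau_B \<B>0) Ball"
    moreover have "(\<lambda>x. 0) \<in> Ball"
    proof -
      have "p0 (\<lambda>x. 0) = q (\<lambda>x. 0)" using pi_id V0 p0_def by auto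
      also have "\<dots> \<le> 0" using q_le S0 by blast
      finally show ?thesis unfolding Ball_def using CX_0 by auto
    qed
    ultimately have Bo: "Ball \<subseteq> CX \<and> (\<forall>v0\<in>Ball. \<exists>J \<epsilon>. finite J \<and> J \<subseteq> \<B>0 \<and> \<epsilon> > 0 \<and>
        {v\<in>CX. \<forall>i\<in>J. rho_B i (\<lambda>x. v x - v0 x) < ereal \<epsilon>} \<subseteq> Ball)"
      and z: "(\<lambda>x. 0) \<in> Ball"
      unfolding tau_B_def openin_snt by blast+
    have "\<exists>J \<epsilon>. finite J \<and> J \<subseteq> \<B>0 \<and> \<epsilon> > 0 \<and>
        {v\<in>CX. \<forall>i\<in>J. rho_B i (\<lambda>x. v x - 0) < ereal \<epsilon>} \<subseteq> Ball"
      using conjunct2[OF Bo] z by (rule bspec)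
    then obtain J \<epsilon> where Je: "finite J" "J \<subseteq> \<B>0" "\<epsilon> > 0"
        "{v\<in>CX. \<forall>i\<in>J. rho_B i (\<lambda>x. v x - 0) < ereal \<epsilon>} \<subseteq> Ball"
      by blast
    obtain f where f: "f \<in> CX" "\<forall>i\<in>J. \<forall>x\<in>i. f x = 0" "\<forall>\<delta>>0. \<exists>x\<in>enlarge B0 \<delta>. f x = 1"
        "\<forall>x. \<bar>f x\<bar> \<le> 1"
      using bad_fn[OF born base B B0 Je(1,2)] by blast
    have "\<forall>i\<in>J. rho_B i (\<lambda>x. f x - 0) < ereal \<epsilon>"
      using f(2) Je(3) unfolding rho_B_less by auto
    then have "f \<in> {v\<in>CX. \<forall>i\<in>J. rho_B i (\<lambda>x. v x - 0) < ereal \<epsilon>}" using f(1) by (intro CollectI conjI)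
    with Je(4) have "f \<in> Ball" by (rule subsetD)
    then have lt: "p0 f < 1" unfolding Ball_def by auto
    have "1 \<in> S f" unfolding S_def using f(4) by (auto intro: exI[of _ 1])
    then have fV: "f \<in> V" using f(1) V_def by auto
    have "1 \<le> q f"
      unfolding q_def
    proof (rule cInf_greatest)
      show "S f \<noteq> {}" using \<open>1 \<in> S f\<close> by auto
      fix t assume "t \<in> S f"
      then obtain \<delta> where "\<delta> > 0" "\<forall>x\<in>enlarge B0 \<delta>. \<bar>f x\<bar> \<le> t" unfolding S_def by auto
      then show "1 \<le> t" using f(3) by fastforce
    qed
    then show False using lt pi_id[OF fV] p0_def by auto
  qed
  then have "\<not> coarser \<sigma> (tau_B \<B>0)" using oBall unfolding coarser_def by blast
  then show ?thesis using lc c1 by blast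
qed

lemma shield_super:
  assumes sh: "shield i A1" and sub: "A1 \<subseteq> B1"
  shows "shield i B1"
proof -
  have 1: "i \<subseteq> A1" using sh unfolding shield_def by (rule conjunct1)
  have 2: "\<forall>C. closed C \<and> C \<inter> A1 = {} \<longrightarrow> (\<exists>\<delta>>0. C \<inter> enlarge i \<delta> = {})"
    using sh unfolding shield_def by (rule conjunct2)
  have "i \<subseteq> B1" using 1 sub by (rule subset_trans)
  moreover have "\<forall>C. closed C \<and> C \<inter> B1 = {} \<longrightarrow> (\<exists>\<delta>>0. C \<inter> enlarge i \<delta> = {})"
  proof (intro allI impI)
    fix C assume C: "closed C \<and> C \<inter> B1 = {}"
    then have "closed C \<and> C \<inter> A1 = {}" using sub by blast
    then show "\<exists>\<delta>>0. C \<inter> enlarge i \<delta> = {}" using 2 by blast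
  qed
  ultimately show ?thesis unfolding shield_def by (rule conjI)
qed

lemma rho_le:
  assumes "rho_sB i g < ereal \<epsilon>"
  shows "rho_B i g < ereal \<epsilon>"
proof -
  obtain \<delta> t where dt: "\<delta> > 0" "t < \<epsilon>" "\<forall>x\<in>enlarge i \<delta>. \<bar>g x\<bar> \<le> t"
    using assms unfolding rho_sB_less by blast
  have "\<forall>x\<in>i. \<bar>g x\<bar> \<le> t" using dt(3) subset_enlarge[OF dt(1), of i] by blast
  then show ?thesis unfolding rho_B_less using dt(2) by blast
qed

lemma shield_rho:
  assumes sh: "shield i A1" and g: "continuous_on UNIV g" and r: "rho_B A1 g < ereal \<epsilon>"
  shows "rho_sB i g < ereal \<epsilon>"
proof -
  obtain t where t: "t < \<epsilon>" "\<forall>x\<in>A1. \<bar>g x\<bar> \<le> t" using r unfolding rho_B_less by blast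
  define t' where "t' = (t + \<epsilon>)/2"
  have tt: "t < t'" "t' < \<epsilon>" using t(1) unfolding t'_def by simp_all
  have cl: "closed {x. t' \<le> \<bar>g x\<bar>}" by (intro closed_Collect_le continuous_intros g)
  have "\<forall>x\<in>A1. \<not> t' \<le> \<bar>g x\<bar>" using t(2) tt(1) by fastforce
  then have dj: "{x. t' \<le> \<bar>g x\<bar>} \<inter> A1 = {}" by blast
  have 2: "\<forall>C. closed C \<and> C \<inter> A1 = {} \<longrightarrow> (\<exists>\<delta>>0. C \<inter> enlarge i \<delta> = {})"
    using sh unfolding shield_def by (rule conjunct2)
  obtain \<delta> where d: "\<delta>>0" "{x. t' \<le> \<bar>g x\<bar>} \<inter> enlarge i \<delta> = {}"
    using 2[rule_format, OF conjI[OF cl dj]] by blast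
  have "\<forall>x\<in>enlarge i \<delta>. \<bar>g x\<bar> \<le> t'"
  proof
    fix x assume x: "x \<in> enlarge i \<delta>"
    show "\<bar>g x\<bar> \<le> t'"
    proof (rule ccontr)
      assume "\<not> \<bar>g x\<bar> \<le> t'"
      then have "x \<in> {x. t' \<le> \<bar>g x\<bar>} \<inter> enlarge i \<delta>" using x by simp
      then show False using d(2) by blast
    qed
  qed
  then show ?thesis unfolding rho_sB_less using d(1) tt(2) by blast
qed

lemma shielded_eq:
  assumes base: "closed_bornology_base \<B> \<B>0" and sh: "shielded_from_closed_sets \<B>"
  shows "tau_B \<B>0 = tau_sB \<B>0"
proof -
  have sub: "\<B>0 \<subseteq> \<B>" using base unfolding closed_bornology_base_def bornology_base_def by simp
  have baseB: "\<forall>B\<in>\<B>. \<exists>B0\<in>\<B>0. B \<subseteq> B0"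
    using base unfolding closed_bornology_base_def bornology_base_def by simp
  have shB: "\<forall>B\<in>\<B>. \<exists>A1\<in>\<B>. shield B A1" using sh unfolding shielded_from_closed_sets_def .
  have ex: "\<forall>i\<in>\<B>0. \<exists>B1. B1 \<in> \<B>0 \<and> shield i B1"
  proof
    fix i assume "i \<in> \<B>0"
    then have "i \<in> \<B>" using sub by blast
    then obtain A1 where A1: "A1 \<in> \<B>" "shield i A1" using shB by blast
    obtain B1 where B1: "B1 \<in> \<B>0" "A1 \<subseteq> B1" using baseB A1(1) by blast
    have "shield i B1" using shield_super[OF A1(2) B1(2)] .
    then show "\<exists>B1. B1 \<in> \<B>0 \<and> shield i B1" using B1(1) by blast
  qed
  then obtain Sh where Sh: "\<forall>i\<in>\<B>0. Sh i \<in> \<B>0 \<and> shield i (Sh i)"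
    using bchoice[OF ex] by blast
  show ?thesis unfolding topology_eq
  proof (intro allI iffI)
    fix U assume "openin (tau_B \<B>0) U"
    then have U: "U \<subseteq> CX \<and> (\<forall>v0\<in>U. \<exists>J \<epsilon>. finite J \<and> J \<subseteq> \<B>0 \<and> \<epsilon> > 0 \<and>
        {v\<in>CX. \<forall>i\<in>J. rho_B i (\<lambda>x. v x - v0 x) < ereal \<epsilon>} \<subseteq> U)"
      unfolding tau_B_def openin_snt .
    show "openin (tau_sB \<B>0) U" unfolding tau_sB_def openin_snt
    proof (intro conjI ballI)
      show "U \<subseteq> CX" using U by blast
      fix v0 assume "v0 \<in> U"
      then obtain J \<epsilon> where Je: "finite J" "J \<subseteq> \<B>0" "\<epsilon> > 0"
        "{v\<in>CX. \<forall>i\<in>J. rho_B i (\<lambda>x. v x - v0 x) < ereal \<epsilon>} \<subseteq> U" using U by blast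
      have "{v\<in>CX. \<forall>i\<in>J. rho_sB i (\<lambda>x. v x - v0 x) < ereal \<epsilon>} \<subseteq> U"
      proof
        fix v assume "v \<in> {v\<in>CX. \<forall>i\<in>J. rho_sB i (\<lambda>x. v x - v0 x) < ereal \<epsilon>}"
        then have "v \<in> {v\<in>CX. \<forall>i\<in>J. rho_B i (\<lambda>x. v x - v0 x) < ereal \<epsilon>}"
          using rho_le by blast
        then show "v \<in> U" using Je(4) by (rule subsetD[rotated])
      qed
      then show "\<exists>J \<epsilon>. finite J \<and> J \<subseteq> \<B>0 \<and> \<epsilon> > 0 \<and>
        {v\<in>CX. \<forall>i\<in>J. rho_sB i (\<lambda>x. v x - v0 x) < ereal \<epsilon>} \<subseteq> U"
        using Je(1-3) by blast
    qed
  next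
    fix U assume "openin (tau_sB \<B>0) U"
    then have U: "U \<subseteq> CX \<and> (\<forall>v0\<in>U. \<exists>J \<epsilon>. finite J \<and> J \<subseteq> \<B>0 \<and> \<epsilon> > 0 \<and>
        {v\<in>CX. \<forall>i\<in>J. rho_sB i (\<lambda>x. v x - v0 x) < ereal \<epsilon>} \<subseteq> U)"
      unfolding tau_sB_def openin_snt .
    show "openin (tau_B \<B>0) U" unfolding tau_B_def openin_snt
    proof (intro conjI ballI)
      show "U \<subseteq> CX" using U by blast
      fix v0 assume "v0 \<in> U"
      then have v0C: "v0 \<in> CX" using U by blast
      obtain J \<epsilon> where Je: "finite J" "J \<subseteq> \<B>0" "\<epsilon> > 0"
        "{v\<in>CX. \<forall>i\<in>J. rho_sB i (\<lambda>x. v x - v0 x) < ereal \<epsilon>} \<subseteq> U" using U \<open>v0 \<in> U\<close> by blast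
      have "{v\<in>CX. \<forall>j\<in>Sh ` J. rho_B j (\<lambda>x. v x - v0 x) < ereal \<epsilon>} \<subseteq> U"
      proof
        fix v assume v: "v \<in> {v\<in>CX. \<forall>j\<in>Sh ` J. rho_B j (\<lambda>x. v x - v0 x) < ereal \<epsilon>}"
        have cont: "continuous_on UNIV (\<lambda>x. v x - v0 x)"
          using CX_diff[of v v0] v v0C unfolding CX_def by blast
        have "\<forall>i\<in>J. rho_sB i (\<lambda>x. v x - v0 x) < ereal \<epsilon>"
        proof
          fix i assume "i \<in> J"
          then have "i \<in> \<B>0" using Je(2) by blast
          then have sh1: "shield i (Sh i)" using Sh by blast
          have r1: "rho_B (Sh i) (\<lambda>x. v x - v0 x) < ereal \<epsilon>"
            using v \<open>i \<in> J\<close> by blast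
          show "rho_sB i (\<lambda>x. v x - v0 x) < ereal \<epsilon>" by (rule shield_rho[OF sh1 cont r1])
        qed
        then have "v \<in> {v\<in>CX. \<forall>i\<in>J. rho_sB i (\<lambda>x. v x - v0 x) < ereal \<epsilon>}" using v by simp
        then show "v \<in> U" using Je(4) by (rule subsetD[rotated])
      qed
      moreover have "finite (Sh ` J)" using Je(1) by simp
      moreover have "Sh ` J \<subseteq> \<B>0" using Je(2) Sh by blast
      ultimately show "\<exists>J \<epsilon>. finite J \<and> J \<subseteq> \<B>0 \<and> \<epsilon> > 0 \<and>
        {v\<in>CX. \<forall>i\<in>J. rho_B i (\<lambda>x. v x - v0 x) < ereal \<epsilon>} \<subseteq> U"
        using Je(3) by blast
    qed
  qed
qed

lemma eq_shielded:
  fixes \<B> \<B>0 :: "'a::metric_space set set"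
  assumes born: "bornology \<B>" and base: "closed_bornology_base \<B> \<B>0"
    and eq: "tau_B \<B>0 = tau_sB \<B>0"
  shows "shielded_from_closed_sets \<B>"
proof (rule ccontr)
  assume "\<not> ?thesis"
  then obtain B where B: "B \<in> \<B>" "\<forall>A1\<in>\<B>. \<not> shield B A1"
    unfolding shielded_from_closed_sets_def by blast
  obtain B0 where B0: "B0 \<in> \<B>0" "B \<subseteq> B0"
    using base B(1) unfolding closed_bornology_base_def bornology_base_def by blast
  define Bs where "Bs = {v\<in>CX. rho_sB B0 v < ereal 1}"
  have "openin (tau_sB \<B>0) Bs" unfolding tau_sB_def openin_snt
  proof (intro conjI ballI)
    show "Bs \<subseteq> CX" unfolding Bs_def by auto
    fix v0 assume v0: "v0 \<in> Bs"
    then obtain \<delta>0 t0 where d0: "\<delta>0>0" "t0<1" "\<forall>x\<in>enlarge B0 \<delta>0. \<bar>v0 x\<bar> \<le> t0"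
      unfolding Bs_def rho_sB_less by auto
    have "{v\<in>CX. \<forall>i\<in>{B0}. rho_sB i (\<lambda>x. v x - v0 x) < ereal (1 - t0)} \<subseteq> Bs"
    proof
      fix v assume v: "v \<in> {v\<in>CX. \<forall>i\<in>{B0}. rho_sB i (\<lambda>x. v x - v0 x) < ereal (1 - t0)}"
      then obtain \<delta>1 t1 where d1: "\<delta>1>0" "t1 < 1 - t0" "\<forall>x\<in>enlarge B0 \<delta>1. \<bar>v x - v0 x\<bar> \<le> t1"
        unfolding rho_sB_less by auto
      have "\<forall>x\<in>enlarge B0 (min \<delta>0 \<delta>1). \<bar>v x\<bar> \<le> t1 + t0"
      proof
        fix x assume "x \<in> enlarge B0 (min \<delta>0 \<delta>1)"
        then have "x \<in> enlarge B0 \<delta>0" "x \<in> enlarge B0 \<delta>1"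
          using enlarge_mono[of "min \<delta>0 \<delta>1" \<delta>0 B0] enlarge_mono[of "min \<delta>0 \<delta>1" \<delta>1 B0] by auto
        then have "\<bar>v x - v0 x\<bar> \<le> t1" "\<bar>v0 x\<bar> \<le> t0" using d0 d1 by auto
        then show "\<bar>v x\<bar> \<le> t1 + t0" by arith
      qed
      moreover have "t1 + t0 < 1" "min \<delta>0 \<delta>1 > 0" using d0 d1 by auto
      ultimately have "rho_sB B0 v < ereal 1" unfolding rho_sB_less by blast
      then show "v \<in> Bs" using v Bs_def by auto
    qed
    moreover have "finite {B0}" "{B0} \<subseteq> \<B>0" "1 - t0 > 0" using B0(1) d0(2) by auto
    ultimately show "\<exists>J \<epsilon>. finite J \<and> J \<subseteq> \<B>0 \<and> \<epsilon> > 0 \<and>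
        {v\<in>CX. \<forall>i\<in>J. rho_sB i (\<lambda>x. v x - v0 x) < ereal \<epsilon>} \<subseteq> Bs" by blast
  qed
  then have Bo: "Bs \<subseteq> CX \<and> (\<forall>v0\<in>Bs. \<exists>J \<epsilon>. finite J \<and> J \<subseteq> \<B>0 \<and> \<epsilon> > 0 \<and>
        {v\<in>CX. \<forall>i\<in>J. rho_B i (\<lambda>x. v x - v0 x) < ereal \<epsilon>} \<subseteq> Bs)"
    unfolding eq[symmetric] tau_B_def openin_snt .
  have "rho_sB B0 (\<lambda>x. 0) < ereal 1" unfolding rho_sB_less
    by (rule exI[of _ 1], rule conjI, simp, rule exI[of _ 0], auto)
  then have z: "(\<lambda>x. 0) \<in> Bs" unfolding Bs_def using CX_0 by auto
  have "\<exists>J \<epsilon>. finite J \<and> J \<subseteq> \<B>0 \<and> \<epsilon> > 0 \<and>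
        {v\<in>CX. \<forall>i\<in>J. rho_B i (\<lambda>x. v x - 0) < ereal \<epsilon>} \<subseteq> Bs"
    using conjunct2[OF Bo] z by (rule bspec)
  then obtain J \<epsilon> where Je: "finite J" "J \<subseteq> \<B>0" "\<epsilon> > 0"
      "{v\<in>CX. \<forall>i\<in>J. rho_B i (\<lambda>x. v x - 0) < ereal \<epsilon>} \<subseteq> Bs"
    by blast
  obtain f where f: "f \<in> CX" "\<forall>i\<in>J. \<forall>x\<in>i. f x = 0" "\<forall>\<delta>>0. \<exists>x\<in>enlarge B0 \<delta>. f x = 1"
      "\<forall>x. \<bar>f x\<bar> \<le> 1"
    using bad_fn[OF born base B B0 Je(1,2)] by blast
  have "\<forall>i\<in>J. rho_B i (\<lambda>x. f x - 0) < ereal \<epsilon>"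
    using f(2) Je(3) unfolding rho_B_less by auto
  then have "f \<in> {v\<in>CX. \<forall>i\<in>J. rho_B i (\<lambda>x. v x - 0) < ereal \<epsilon>}" using f(1) by (intro CollectI conjI)
  with Je(4) have "f \<in> Bs" by (rule subsetD)
  then obtain \<delta> t where "\<delta>>0" "t<1" "\<forall>x\<in>enlarge B0 \<delta>. \<bar>f x\<bar> \<le> t"
    unfolding Bs_def rho_sB_less by auto
  then show False using f(3) by fastforce
qed

lemma finest_le:
  assumes a: "finest_lc_topology V \<tau> T" and b: "finest_lc_topology V \<tau> T'"
  shows "coarser T T'"
proof -
  have "locally_convex_topology V T" "coarser T \<tau>" using a unfolding finest_lc_topology_def by simp_all
  moreover have "\<forall>\<sigma>. locally_convex_topology V \<sigma> \<and> coarser \<sigma> \<tau> \<longrightarrow> coarser \<sigma> T'"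
    using b unfolding finest_lc_topology_def by simp
  ultimately show ?thesis by simp
qed

lemma finest_unique: "finest_lc_topology V \<tau> T \<Longrightarrow> finest_lc_topology V \<tau> T' \<Longrightarrow> T = T'"
proof -
  assume a: "finest_lc_topology V \<tau> T" and b: "finest_lc_topology V \<tau> T'"
  have "coarser T T'" "coarser T' T" using finest_le a b by auto
  then show "T = T'" unfolding topology_eq coarser_def by auto
qed

theorem theorem3p15:
  fixes \<B> \<B>0 :: "'a::metric_space set set"
    and TF TFs :: "('a \<Rightarrow> real) topology"
  assumes "bornology \<B>"
    and "closed_bornology_base \<B> \<B>0"
    and "finest_lc_topology CX (tau_B \<B>0) TF"
    and "finest_lc_topology CX (tau_sB \<B>0) TFs"
  shows "(TF = TFs \<longleftrightarrow> tau_B \<B>0 = tau_sB \<B>0)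
    \<and> (tau_B \<B>0 = tau_sB \<B>0 \<longleftrightarrow> shielded_from_closed_sets \<B>)"
proof -
  have i_iii: "shielded_from_closed_sets \<B>" if TFe: "TF = TFs"
  proof (rule ccontr)
    assume "\<not> shielded_from_closed_sets \<B>"
    then obtain B where B: "B \<in> \<B>" "\<forall>A1\<in>\<B>. \<not> shield B A1"
      unfolding shielded_from_closed_sets_def by blast
    obtain \<sigma> where s: "locally_convex_topology CX \<sigma>" "coarser \<sigma> (tau_sB \<B>0)" "\<not> coarser \<sigma> (tau_B \<B>0)"
      using not_shielded_lc[OF assms(1,2) B] by blast
    have "\<forall>\<sigma>. locally_convex_topology CX \<sigma> \<and> coarser \<sigma> (tau_sB \<B>0) \<longrightarrow> coarser \<sigma> TFs"
      using assms(4) unfolding finest_lc_topology_def by simp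
    then have "coarser \<sigma> TFs" using s(1,2) by simp
    moreover have "coarser TF (tau_B \<B>0)" using assms(3) unfolding finest_lc_topology_def by simp
    ultimately have "coarser \<sigma> (tau_B \<B>0)" using TFe unfolding coarser_def by simp
    then show False using s(3) by blast
  qed
  have ii_i: "TF = TFs" if "tau_B \<B>0 = tau_sB \<B>0"
    using finest_unique[OF assms(3)] assms(4) that by simp
  show ?thesis
    using i_iii ii_i shielded_eq[OF assms(2)] eq_shielded[OF assms(1,2)] by blast
qed

end
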